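(* Consider the many-server system described in the context under any load balancing policy for which the state process is an irreducible finite CTMC, and let $S$ be its stationary state. Let $\Delta=\frac{\log N}{\sqrt N}$, $\eta=\lambda+k\Delta$, $h(x)=\max\{x-\eta,0\}$ and $g'(x)=-\frac{\max\{x-\eta,0\}}{\Delta}$. Let $D_1=\sum_{m=1}^M w_m S_{1,m}$. Then $$\mathbb E\left[h\left(\sum_{i=1}^b S_i\right)\right]\leq J_1+\frac{5\mu_{\max}+\lambda}{\sqrt N\log N},$$ where $$J_1=\mathbb E\left[g'\left(\sum_{i=1}^bS_i\right)\bigl(\lambda A_b(S)-\lambda-\Delta+D_1\bigr)\mathbb I\Bigl\{\sum_{i=1}^bS_i>\eta+\tfrac1N\Bigr\}\right].$$
   Context: System: $N\ge2$ identical servers, each able to hold at most $b$ jobs ($b\ge1$ finite), FIFO; a job routed to a server holding $b$ jobs is discarded. Poisson arrivals of rate $\lambda N$, $\lambda=1-N^{-\alpha}$, $0<\alpha<1/2$. Service times i.i.d. Coxian with $M$ phases: phase $m$ exponential with rate $\mu_m>0$; after phase $m<M$ the job enters phase $m+1$ with probability $p_m\in[0,1)$, otherwise departs; after phase $M$ it departs. $v_m=\prod_{i=1}^{m-1}p_i/\mu_m$ with $\sum_mv_m=1$; $\bar v=\min_mv_m$. $S_{i,m}$ = fraction of servers with at least $i$ jobs whose job in service is in phase $m$, $S_i=\sum_mS_{i,m}$; the policy routes arrivals based on the current state. $A_b(s)$ = probability an incoming job is routed to a server with at least $b$ jobs given state $s$. Constants: $w_m=(1-p_m)\mu_m$ for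 $m<M$, $w_M=\mu_M$; $w_u=\max_mw_m$, $w_l=\min_mw_m$, $\mu_{\max}=\max_m\mu_m$; for $2\le m\le M$, $a_m=\frac{\mu_m}{p_1\mu_1+\mu_m}$, $b_m=(1-a_m)(1+\sum_{r=m+1}^M\frac{v_r}{v_1})-\frac{a_mv_m}{v_1}$; $\xi=\sum_{m=2}^Mb_m\prod_{j=m+1}^Ma_j$ (asserted $0<\xi<1$), $C=\sqrt{\frac{2\bar v^2\log(1/\xi)}{3M+(3M+4)\log(1/\xi)}}$, $\theta_m=\frac{6\mu_1v_m+5(m-1)v_m}{C}$, $\zeta=\frac{4w_ub}{w_l}\bigl[(\frac1{w_l}-\frac1{w_u})\sum_m\theta_mw_m+\frac1{w_l}+6\bigr]$, $k=\frac{\sum_m\theta_mw_m}{w_u}+(1+\frac{w_l}{4w_ub})\zeta-\sum_m\theta_m$. *)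

theory Defs
  imports "HOL-Analysis.Analysis"
begin

text \<open>System state: server j (j < N) is described by a pair (queue length, phase of the job
in service). Phases are 1..M; an empty server carries phase 0. Servers j >= N are (0,0).\<close>

type_synonym sys_state = "nat \<Rightarrow> nat \<times> nat"

definition valid_state :: "nat \<Rightarrow> nat \<Rightarrow> nat \<Rightarrow> sys_state \<Rightarrow> bool" where
  "valid_state N b M s \<longleftrightarrow>
     (\<forall>j. (j < N \<longrightarrow> fst (s j) \<le> b
                    \<and> (fst (s j) = 0 \<longrightarrow> snd (s j) = 0)
                    \<and> (1 \<le> fst (s j) \<longrightarrow> 1 \<le> snd (s j) \<and> snd (s j) \<le> M))
        \<and> (N \<le> j \<longrightarrow> s j = (0, 0)))"

definition states :: "nat \<Rightarrow> nat \<Rightarrow> nat \<Rightarrow> sys_state set" where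
  "states N b M = {s. valid_state N b M s}"

definition arr_next :: "nat \<Rightarrow> sys_state \<Rightarrow> nat \<Rightarrow> sys_state" where
  "arr_next b s j = (if fst (s j) < b
     then s(j := (fst (s j) + 1, if fst (s j) = 0 then 1 else snd (s j))) else s)"

definition phase_next :: "sys_state \<Rightarrow> nat \<Rightarrow> sys_state" where
  "phase_next s j = s(j := (fst (s j), snd (s j) + 1))"

definition dep_next :: "sys_state \<Rightarrow> nat \<Rightarrow> sys_state" where
  "dep_next s j = s(j := (fst (s j) - 1, if 2 \<le> fst (s j) then 1 else 0))"

text \<open>Continuation probability, with the convention that after phase M the job departs.\<close>
definition pc :: "nat \<Rightarrow> (nat \<Rightarrow> real) \<Rightarrow> nat \<Rightarrow> real" where
  "pc M p m = (if m < M then p m else 0)"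

text \<open>Transition rate from s to s' of the CTMC (self-loops included; they cancel in the
balance equations). Arrivals have total rate lam*N and are routed to server j with
probability r s j.\<close>
definition trans_rate :: "nat \<Rightarrow> nat \<Rightarrow> nat \<Rightarrow> real \<Rightarrow> (nat \<Rightarrow> real) \<Rightarrow> (nat \<Rightarrow> real)
     \<Rightarrow> (sys_state \<Rightarrow> nat \<Rightarrow> real) \<Rightarrow> sys_state \<Rightarrow> sys_state \<Rightarrow> real" where
  "trans_rate N b M lam mu p r s s' =
     (\<Sum>j<N. lam * real N * r s j * (if arr_next b s j = s' then 1 else 0)
        + (if 1 \<le> fst (s j) then
             mu (snd (s j)) * pc M p (snd (s j)) * (if phase_next s j = s' then 1 else 0)
           + mu (snd (s j)) * (1 - pc M p (snd (s j))) * (if dep_next s j = s' then 1 else 0)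
           else 0))"

definition routing_policy :: "nat \<Rightarrow> nat \<Rightarrow> nat \<Rightarrow> (sys_state \<Rightarrow> nat \<Rightarrow> real) \<Rightarrow> bool" where
  "routing_policy N b M r \<longleftrightarrow>
     (\<forall>s \<in> states N b M. (\<forall>j<N. 0 \<le> r s j) \<and> (\<Sum>j<N. r s j) = 1)"

definition irreducible_ctmc :: "sys_state set \<Rightarrow> (sys_state \<Rightarrow> sys_state \<Rightarrow> real) \<Rightarrow> bool" where
  "irreducible_ctmc X q \<longleftrightarrow>
     finite X \<and> (\<forall>s\<in>X. \<forall>t\<in>X. (s, t) \<in> {(x, y). x \<in> X \<and> y \<in> X \<and> x \<noteq> y \<and> 0 < q x y}\<^sup>*)"

definition stationary_dist :: "sys_state set \<Rightarrow> (sys_state \<Rightarrow> sys_state \<Rightarrow> real)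
     \<Rightarrow> (sys_state \<Rightarrow> real) \<Rightarrow> bool" where
  "stationary_dist X q pd \<longleftrightarrow>
     (\<forall>s\<in>X. 0 \<le> pd s) \<and> (\<Sum>s\<in>X. pd s) = 1 \<and>
     (\<forall>t\<in>X. (\<Sum>s\<in>X. pd s * q s t) = pd t * (\<Sum>u\<in>X. q t u))"

definition S_im :: "nat \<Rightarrow> sys_state \<Rightarrow> nat \<Rightarrow> nat \<Rightarrow> real" where
  "S_im N s i m = real (card {j. j < N \<and> i \<le> fst (s j) \<and> snd (s j) = m}) / real N"

definition S_i :: "nat \<Rightarrow> nat \<Rightarrow> sys_state \<Rightarrow> nat \<Rightarrow> real" where
  "S_i N M s i = (\<Sum>m=1..M. S_im N s i m)"

definition S_tot :: "nat \<Rightarrow> nat \<Rightarrow> nat \<Rightarrow> sys_state \<Rightarrow> real" where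
  "S_tot N b M s = (\<Sum>i=1..b. S_i N M s i)"

definition A_b :: "nat \<Rightarrow> nat \<Rightarrow> (sys_state \<Rightarrow> nat \<Rightarrow> real) \<Rightarrow> sys_state \<Rightarrow> real" where
  "A_b N b r s = (\<Sum>j\<in>{j. j < N \<and> b \<le> fst (s j)}. r s j)"

definition vv :: "(nat \<Rightarrow> real) \<Rightarrow> (nat \<Rightarrow> real) \<Rightarrow> nat \<Rightarrow> real" where
  "vv mu p m = (\<Prod>i\<in>{1..<m}. p i) / mu m"

definition vbar :: "nat \<Rightarrow> (nat \<Rightarrow> real) \<Rightarrow> (nat \<Rightarrow> real) \<Rightarrow> real" where
  "vbar M mu p = Min (vv mu p ` {1..M})"

definition ww :: "nat \<Rightarrow> (nat \<Rightarrow> real) \<Rightarrow> (nat \<Rightarrow> real) \<Rightarrow> nat \<Rightarrow> real" where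
  "ww M mu p m = (if m < M then (1 - p m) * mu m else mu m)"

definition w_u :: "nat \<Rightarrow> (nat \<Rightarrow> real) \<Rightarrow> (nat \<Rightarrow> real) \<Rightarrow> real" where
  "w_u M mu p = Max (ww M mu p ` {1..M})"

definition w_l :: "nat \<Rightarrow> (nat \<Rightarrow> real) \<Rightarrow> (nat \<Rightarrow> real) \<Rightarrow> real" where
  "w_l M mu p = Min (ww M mu p ` {1..M})"

definition mu_max :: "nat \<Rightarrow> (nat \<Rightarrow> real) \<Rightarrow> real" where
  "mu_max M mu = Max (mu ` {1..M})"

definition aa :: "(nat \<Rightarrow> real) \<Rightarrow> (nat \<Rightarrow> real) \<Rightarrow> nat \<Rightarrow> real" where
  "aa mu p m = mu m / (p 1 * mu 1 + mu m)"

definition bb :: "nat \<Rightarrow> (nat \<Rightarrow> real) \<Rightarrow> (nat \<Rightarrow> real) \<Rightarrow> nat \<Rightarrow> real" where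
  "bb M mu p m = (1 - aa mu p m) * (1 + (\<Sum>r=m+1..M. vv mu p r / vv mu p 1))
                 - aa mu p m * vv mu p m / vv mu p 1"

definition xi :: "nat \<Rightarrow> (nat \<Rightarrow> real) \<Rightarrow> (nat \<Rightarrow> real) \<Rightarrow> real" where
  "xi M mu p = (\<Sum>m=2..M. bb M mu p m * (\<Prod>j=m+1..M. aa mu p j))"

definition CC :: "nat \<Rightarrow> (nat \<Rightarrow> real) \<Rightarrow> (nat \<Rightarrow> real) \<Rightarrow> real" where
  "CC M mu p = sqrt (2 * (vbar M mu p)\<^sup>2 * ln (1 / xi M mu p)
                 / (3 * real M + (3 * real M + 4) * ln (1 / xi M mu p)))"

definition theta :: "nat \<Rightarrow> (nat \<Rightarrow> real) \<Rightarrow> (nat \<Rightarrow> real) \<Rightarrow> nat \<Rightarrow> real" where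
  "theta M mu p m = (6 * mu 1 * vv mu p m + 5 * (real m - 1) * vv mu p m) / CC M mu p"

definition zeta :: "nat \<Rightarrow> nat \<Rightarrow> (nat \<Rightarrow> real) \<Rightarrow> (nat \<Rightarrow> real) \<Rightarrow> real" where
  "zeta b M mu p = 4 * w_u M mu p * real b / w_l M mu p *
     ((1 / w_l M mu p - 1 / w_u M mu p) * (\<Sum>m=1..M. theta M mu p m * ww M mu p m)
      + 1 / w_l M mu p + 6)"

definition kk :: "nat \<Rightarrow> nat \<Rightarrow> (nat \<Rightarrow> real) \<Rightarrow> (nat \<Rightarrow> real) \<Rightarrow> real" where
  "kk b M mu p = (\<Sum>m=1..M. theta M mu p m * ww M mu p m) / w_u M mu p
     + (1 + w_l M mu p / (4 * w_u M mu p * real b)) * zeta b M mu p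
     - (\<Sum>m=1..M. theta M mu p m)"

end

theory Submission
  imports Defs
begin



lemma card_ind: fixes N :: nat shows "real (card {j. j < N \<and> P j}) = (\<Sum>j<N. if P j then 1 else 0)"
proof -
  have e: "{j. j < N \<and> P j} = {j \<in> {..<N}. P j}" by blast
  have "(\<Sum>j<N. if P j then 1 else 0) = (\<Sum>j\<in>{j\<in>{..<N}. P j}. 1::real)" 
    by (rule sum.inter_filter[symmetric]) simp
  also have "\<dots> = real (card {j\<in>{..<N}. P j})" by (rule real_of_card[symmetric])
  finally show ?thesis unfolding e by (rule sym)
qed
lemma sum_upd_real:
  fixes f :: "nat \<times> nat \<Rightarrow> real" and N j :: nat
  assumes "j < N"
  shows "(\<Sum>k<N. f ((s(j:=x)) k)) = (\<Sum>k<N. f (s k)) - f (s j) + f x"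
proof -
  have A: "(\<Sum>k<N. f ((s(j:=x)) k)) = f x + (\<Sum>k\<in>{..<N}-{j}. f ((s(j:=x)) k))"
    using assms sum.remove[of "{..<N}" j "\<lambda>k. f ((s(j:=x)) k)"] by simp
  have B: "(\<Sum>k<N. f (s k)) = f (s j) + (\<Sum>k\<in>{..<N}-{j}. f (s k))"
    using assms sum.remove[of "{..<N}" j "\<lambda>k. f (s k)"] by simp
  have C: "(\<Sum>k\<in>{..<N}-{j}. f ((s(j:=x)) k)) = (\<Sum>k\<in>{..<N}-{j}. f (s k))"
    by (rule sum.cong) auto
  show ?thesis using A B C by simp
qed
lemma valid_D:
  assumes "s \<in> states N b M" "j < N"
  shows "fst (s j) \<le> b" "fst (s j) = 0 \<Longrightarrow> snd (s j) = 0"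
    "1 \<le> fst (s j) \<Longrightarrow> 1 \<le> snd (s j)" "1 \<le> fst (s j) \<Longrightarrow> snd (s j) \<le> M"
  using assms by (auto simp: states_def valid_state_def)

lemma S_tot_eq:
  assumes s: "s \<in> states N b M"
  shows "S_tot N b M s = (\<Sum>j<N. real (fst (s j))) / real N"
proof -
  have inner: "(\<Sum>i=1..b. \<Sum>m=1..M. (if i \<le> fst (s j) \<and> snd (s j) = m then 1 else 0::real))
      = real (fst (s j))" if j: "j < N" for j
  proof -
    have "(\<Sum>m=1..M. (if i \<le> fst (s j) \<and> snd (s j) = m then 1 else 0::real))
        = (if i \<le> fst (s j) then 1 else 0)" if i: "1 \<le> i" for i
    proof (cases "i \<le> fst (s j)")
      case True
      then have "1 \<le> snd (s j)" "snd (s j) \<le> M" using valid_D[OF s j] i by auto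
      have "(\<Sum>m=1..M. (if i \<le> fst (s j) \<and> snd (s j) = m then 1 else 0::real))
          = (\<Sum>m=1..M. if snd (s j) = m then 1 else 0)" using True by (intro sum.cong) auto
      also have "\<dots> = 1" using \<open>1 \<le> snd (s j)\<close> \<open>snd (s j) \<le> M\<close> by simp
      finally show ?thesis using True by simp
    next
      case False then show ?thesis by simp
    qed
    then have "(\<Sum>i=1..b. \<Sum>m=1..M. (if i \<le> fst (s j) \<and> snd (s j) = m then 1 else 0::real))
        = (\<Sum>i=1..b. (if i \<le> fst (s j) then 1 else 0))" by (intro sum.cong) auto
    also have "\<dots> = real (card {i \<in> {1..b}. i \<le> fst (s j)})"
      by (simp add: sum.inter_filter[symmetric])
    also have "{i \<in> {1..b}. i \<le> fst (s j)} = {1..fst (s j)}" using valid_D(1)[OF s j] by auto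
    finally show ?thesis by simp
  qed
  have "S_tot N b M s = (\<Sum>i=1..b. \<Sum>m=1..M. \<Sum>j<N. (if i \<le> fst (s j) \<and> snd (s j) = m then 1 else 0::real) / real N)"
    unfolding S_tot_def S_i_def S_im_def card_ind by (simp add: sum_divide_distrib)
  also have "\<dots> = (\<Sum>j<N. \<Sum>i=1..b. \<Sum>m=1..M. (if i \<le> fst (s j) \<and> snd (s j) = m then 1 else 0::real)) / real N"
    unfolding sum_divide_distrib by (rule trans[OF sum.cong[OF refl sum.swap] sum.swap])
  also have "\<dots> = (\<Sum>j<N. real (fst (s j))) / real N"
    using inner by (intro arg_cong[where f="\<lambda>x. x / real N"] sum.cong) auto
  finally show ?thesis .
qed

lemma D1_eq:
  assumes s: "s \<in> states N b M"
  shows "(\<Sum>m=1..M. ww M mu p m * S_im N s 1 m)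
     = (\<Sum>j<N. if 1 \<le> fst (s j) then ww M mu p (snd (s j)) else 0) / real N"
proof -
  have inner: "(\<Sum>m=1..M. ww M mu p m * (if 1 \<le> fst (s j) \<and> snd (s j) = m then 1 else 0))
      = (if 1 \<le> fst (s j) then ww M mu p (snd (s j)) else 0)" if j: "j < N" for j
  proof (cases "1 \<le> fst (s j)")
    case True
    then have "1 \<le> snd (s j)" "snd (s j) \<le> M" using valid_D[OF s j] by auto
    have "(\<Sum>m=1..M. ww M mu p m * (if 1 \<le> fst (s j) \<and> snd (s j) = m then 1 else 0))
        = (\<Sum>m=1..M. if snd (s j) = m then ww M mu p m else 0)"
      using True by (intro sum.cong) auto
    also have "\<dots> = ww M mu p (snd (s j))" using \<open>1 \<le> snd (s j)\<close> \<open>snd (s j) \<le> M\<close> by simp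
    finally show ?thesis using True by simp
  next
    case False then show ?thesis by simp
  qed
  have "(\<Sum>m=1..M. ww M mu p m * S_im N s 1 m)
     = (\<Sum>m=1..M. \<Sum>j<N. ww M mu p m * (if 1 \<le> fst (s j) \<and> snd (s j) = m then 1 else 0) / real N)"
    unfolding S_im_def card_ind by (simp add: sum_divide_distrib sum_distrib_left)
  also have "\<dots> = (\<Sum>j<N. \<Sum>m=1..M. ww M mu p m * (if 1 \<le> fst (s j) \<and> snd (s j) = m then 1 else 0)) / real N"
    unfolding sum_divide_distrib by (rule sum.swap)
  also have "\<dots> = (\<Sum>j<N. if 1 \<le> fst (s j) then ww M mu p (snd (s j)) else 0) / real N"
    using inner by (intro arg_cong[where f="\<lambda>x. x / real N"] sum.cong) auto
  finally show ?thesis .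
qed

lemma Ab_eq:
  assumes s: "s \<in> states N b M" and pol: "routing_policy N b M r"
  shows "1 - A_b N b r s = (\<Sum>j<N. if fst (s j) < b then r s j else 0)"
    "0 \<le> A_b N b r s" "A_b N b r s \<le> 1"
proof -
  have sum1: "(\<Sum>j<N. r s j) = 1" and nn: "\<forall>j<N. 0 \<le> r s j"
    using pol s by (auto simp: routing_policy_def)
  have A: "A_b N b r s = (\<Sum>j<N. if b \<le> fst (s j) then r s j else 0)"
  proof -
    have e: "{j. j < N \<and> b \<le> fst (s j)} = {j \<in> {..<N}. b \<le> fst (s j)}" by auto
    show ?thesis unfolding A_b_def e by (rule sum.inter_filter) simp
  qed
  have "(\<Sum>j<N. r s j) = (\<Sum>j<N. (if b \<le> fst (s j) then r s j else 0) + (if fst (s j) < b then r s j else 0))"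
    by (intro sum.cong) auto
  then show "1 - A_b N b r s = (\<Sum>j<N. if fst (s j) < b then r s j else 0)"
    using A sum1 by (simp add: sum.distrib)
  show "0 \<le> A_b N b r s" unfolding A using nn by (intro sum_nonneg) auto
  have "(\<Sum>j<N. if fst (s j) < b then r s j else 0) \<ge> 0" using nn by (intro sum_nonneg) auto
  then show "A_b N b r s \<le> 1" using \<open>1 - A_b N b r s = _\<close> by linarith
qed



lemma stat_zero:
  fixes f :: "sys_state \<Rightarrow> real"
  assumes fin: "finite X" and st: "stationary_dist X q pd"
  shows "(\<Sum>s\<in>X. pd s * (\<Sum>t\<in>X. q s t * (f t - f s))) = 0"
proof -
  have bal: "\<forall>t\<in>X. (\<Sum>s\<in>X. pd s * q s t) = pd t * (\<Sum>u\<in>X. q t u)"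
    using st by (simp add: stationary_dist_def)
  have "(\<Sum>s\<in>X. pd s * (\<Sum>t\<in>X. q s t * f t)) = (\<Sum>s\<in>X. \<Sum>t\<in>X. pd s * q s t * f t)"
    by (simp add: sum_distrib_left mult.assoc)
  also have "\<dots> = (\<Sum>t\<in>X. \<Sum>s\<in>X. pd s * q s t * f t)" by (rule sum.swap)
  also have "\<dots> = (\<Sum>t\<in>X. (\<Sum>s\<in>X. pd s * q s t) * f t)" by (simp add: sum_distrib_right)
  also have "\<dots> = (\<Sum>t\<in>X. pd t * (\<Sum>u\<in>X. q t u) * f t)" using bal by simp
  also have "\<dots> = (\<Sum>s\<in>X. pd s * (\<Sum>t\<in>X. q s t * f s))"
    by (simp add: sum_distrib_left sum_distrib_right mult.assoc mult.commute mult.left_commute)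
  finally have e: "(\<Sum>s\<in>X. pd s * (\<Sum>t\<in>X. q s t * f t)) = (\<Sum>s\<in>X. pd s * (\<Sum>t\<in>X. q s t * f s))" .
  have "(\<Sum>s\<in>X. pd s * (\<Sum>t\<in>X. q s t * (f t - f s)))
      = (\<Sum>s\<in>X. pd s * (\<Sum>t\<in>X. q s t * f t)) - (\<Sum>s\<in>X. pd s * (\<Sum>t\<in>X. q s t * f s))"
    by (simp add: right_diff_distrib sum_subtractf sum.distrib)
  then show ?thesis using e by simp
qed

lemma sum_ind:
  fixes g :: "sys_state \<Rightarrow> real"
  assumes "finite X"
  shows "(\<Sum>t\<in>X. c * (if T = t then 1 else 0) * g t) = (if T \<in> X then c * g T else 0)"
proof -
  have "(\<Sum>t\<in>X. c * (if T = t then 1 else 0) * g t) = (\<Sum>t\<in>X. if T = t then c * g t else 0)"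
    by (intro sum.cong) auto
  then show ?thesis using assms by simp
qed

lemma drift_eq:
  fixes F :: "sys_state \<Rightarrow> real"
  assumes fin: "finite X"
    and arr: "\<And>j. j < N \<Longrightarrow> arr_next b s j \<in> X \<and> F (arr_next b s j) - F s = (if fst (s j) < b then dp else 0)"
    and dep: "\<And>j. j < N \<Longrightarrow> 1 \<le> fst (s j) \<Longrightarrow> dep_next s j \<in> X \<and> F (dep_next s j) - F s = dm"
    and ph: "\<And>j. j < N \<Longrightarrow> phase_next s j \<in> X \<Longrightarrow> F (phase_next s j) = F s"
  shows "(\<Sum>t\<in>X. trans_rate N b M lam mu p r s t * (F t - F s))
    = (\<Sum>j<N. lam * real N * r s j * (if fst (s j) < b then dp else 0)
         + (if 1 \<le> fst (s j) then mu (snd (s j)) * (1 - pc M p (snd (s j))) * dm else 0))"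
proof -
  have per: "(\<Sum>t\<in>X. (lam * real N * r s j * (if arr_next b s j = t then 1 else 0)
        + (if 1 \<le> fst (s j) then
             mu (snd (s j)) * pc M p (snd (s j)) * (if phase_next s j = t then 1 else 0)
           + mu (snd (s j)) * (1 - pc M p (snd (s j))) * (if dep_next s j = t then 1 else 0)
           else 0)) * (F t - F s))
     = lam * real N * r s j * (if fst (s j) < b then dp else 0)
         + (if 1 \<le> fst (s j) then mu (snd (s j)) * (1 - pc M p (snd (s j))) * dm else 0)"
    if j: "j < N" for j
  proof (cases "1 \<le> fst (s j)")
    case True
    have "(\<Sum>t\<in>X. (lam * real N * r s j * (if arr_next b s j = t then 1 else 0)
        + (if 1 \<le> fst (s j) then
             mu (snd (s j)) * pc M p (snd (s j)) * (if phase_next s j = t then 1 else 0)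
           + mu (snd (s j)) * (1 - pc M p (snd (s j))) * (if dep_next s j = t then 1 else 0)
           else 0)) * (F t - F s))
      = (\<Sum>t\<in>X. lam * real N * r s j * (if arr_next b s j = t then 1 else 0) * (F t - F s))
        + (\<Sum>t\<in>X. mu (snd (s j)) * pc M p (snd (s j)) * (if phase_next s j = t then 1 else 0) * (F t - F s))
        + (\<Sum>t\<in>X. mu (snd (s j)) * (1 - pc M p (snd (s j))) * (if dep_next s j = t then 1 else 0) * (F t - F s))"
      using True by (simp add: distrib_right sum.distrib)
    also have "\<dots> = lam * real N * r s j * (if fst (s j) < b then dp else 0)
         + mu (snd (s j)) * (1 - pc M p (snd (s j))) * dm"
      unfolding sum_ind[OF fin] using arr[OF j] dep[OF j True] ph[OF j] by simp
    finally show ?thesis using True by simp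
  next
    case False
    have "(\<Sum>t\<in>X. (lam * real N * r s j * (if arr_next b s j = t then 1 else 0)
        + (if 1 \<le> fst (s j) then
             mu (snd (s j)) * pc M p (snd (s j)) * (if phase_next s j = t then 1 else 0)
           + mu (snd (s j)) * (1 - pc M p (snd (s j))) * (if dep_next s j = t then 1 else 0)
           else 0)) * (F t - F s))
      = (\<Sum>t\<in>X. lam * real N * r s j * (if arr_next b s j = t then 1 else 0) * (F t - F s))"
      using False by simp
    also have "\<dots> = lam * real N * r s j * (if fst (s j) < b then dp else 0)"
      unfolding sum_ind[OF fin] using arr[OF j] by simp
    finally show ?thesis using False by simp
  qed
  have "(\<Sum>t\<in>X. trans_rate N b M lam mu p r s t * (F t - F s))
     = (\<Sum>t\<in>X. \<Sum>j<N. (lam * real N * r s j * (if arr_next b s j = t then 1 else 0)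
        + (if 1 \<le> fst (s j) then
             mu (snd (s j)) * pc M p (snd (s j)) * (if phase_next s j = t then 1 else 0)
           + mu (snd (s j)) * (1 - pc M p (snd (s j))) * (if dep_next s j = t then 1 else 0)
           else 0)) * (F t - F s))"
    unfolding trans_rate_def by (simp add: sum_distrib_right)
  also have "\<dots> = (\<Sum>j<N. \<Sum>t\<in>X. (lam * real N * r s j * (if arr_next b s j = t then 1 else 0)
        + (if 1 \<le> fst (s j) then
             mu (snd (s j)) * pc M p (snd (s j)) * (if phase_next s j = t then 1 else 0)
           + mu (snd (s j)) * (1 - pc M p (snd (s j))) * (if dep_next s j = t then 1 else 0)
           else 0)) * (F t - F s))" by (rule sum.swap)
  also have "\<dots> = (\<Sum>j<N. lam * real N * r s j * (if fst (s j) < b then dp else 0)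
         + (if 1 \<le> fst (s j) then mu (snd (s j)) * (1 - pc M p (snd (s j))) * dm else 0))"
    using per by (intro sum.cong) auto
  finally show ?thesis .
qed

lemma phi_up:
  fixes x d eta :: real
  shows "(max (x+d-eta) 0)^2/2 - (max (x-eta) 0)^2/2 \<le> max (x-eta) 0 * d + d^2/2"
proof -
  have e: "(x+d-eta)^2/2 - (x-eta)^2/2 = (x-eta)*d + d^2/(2::real)"
    by (simp add: power2_eq_square field_simps)
  show ?thesis
proof (cases "x - eta \<ge> 0")
  case True
  then show ?thesis
  proof (cases "x + d - eta \<ge> 0")
    case True2: True
    have m1: "max (x+d-eta) 0 = x+d-eta" using True2 by simp
    have m2: "max (x-eta) 0 = x-eta" using True by simp
    show ?thesis unfolding m1 m2 using e by simp
  next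
    case False
    have "0 \<le> (x + d - eta)^2" by simp
    have m1: "max (x+d-eta) 0 = 0" using False by simp
    have m2: "max (x-eta) 0 = x-eta" using True by simp
    have z: "(0::real)^2 = 0" by simp
    show ?thesis unfolding m1 m2 using e \<open>0 \<le> (x + d - eta)^2\<close> z by linarith
  qed
next
  case False
  then show ?thesis
  proof (cases "x + d - eta \<ge> 0")
    case True
    have "(x + d - eta)^2 \<le> d^2" using True False
      by (intro power_mono) auto
    then show ?thesis using True False by simp
  next
    case False2: False
    then show ?thesis using False by simp
  qed
qed
qed




lemma arr_in:
  assumes s: "s \<in> states N b M" and j: "j < N" and M1: "1 \<le> M"
  shows "arr_next b s j \<in> states N b M"
  using s j M1 unfolding states_def valid_state_def arr_next_def by auto

lemma dep_in:
  assumes s: "s \<in> states N b M" and j: "j < N" and M1: "1 \<le> M" and f: "1 \<le> fst (s j)"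
  shows "dep_next s j \<in> states N b M"
  using s j M1 f unfolding states_def valid_state_def dep_next_def by auto

lemma tot_arr:
  assumes j: "j < N"
  shows "(\<Sum>k<N. real (fst (arr_next b s j k))) = (\<Sum>k<N. real (fst (s k))) + (if fst (s j) < b then 1 else 0)"
proof (cases "fst (s j) < b")
  case True
  then show ?thesis unfolding arr_next_def
    using sum_upd_real[OF j, of "\<lambda>x. real (fst x)" s] by simp
next
  case False
  then show ?thesis unfolding arr_next_def by simp
qed

lemma tot_dep:
  assumes j: "j < N" and f: "1 \<le> fst (s j)"
  shows "(\<Sum>k<N. real (fst (dep_next s j k))) = (\<Sum>k<N. real (fst (s k))) - 1"
  unfolding dep_next_def using sum_upd_real[OF j, of "\<lambda>x. real (fst x)" s] f by (simp add: of_nat_diff)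

lemma tot_phase:
  assumes j: "j < N"
  shows "(\<Sum>k<N. real (fst (phase_next s j k))) = (\<Sum>k<N. real (fst (s k)))"
  unfolding phase_next_def using sum_upd_real[OF j, of "\<lambda>x. real (fst x)" s] by simp




theorem lemma7:
  fixes N b M :: nat and alpha lam :: real
    and mu p :: "nat \<Rightarrow> real"
    and r :: "sys_state \<Rightarrow> nat \<Rightarrow> real"
    and pd :: "sys_state \<Rightarrow> real"
  assumes N2: "2 \<le> N" and b1: "1 \<le> b" and M1: "1 \<le> M"
    and alpha: "0 < alpha" "alpha < 1/2"
    and lam_def: "lam = 1 - real N powr (- alpha)"
    and mu_pos: "\<forall>m\<in>{1..M}. 0 < mu m"
    and p_rng: "\<forall>m\<in>{1..<M}. 0 \<le> p m \<and> p m < 1"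
    and v_sum: "(\<Sum>m=1..M. vv mu p m) = 1"
    and xi_rng: "0 < xi M mu p" "xi M mu p < 1"
    and policy: "routing_policy N b M r"
    and irred: "irreducible_ctmc (states N b M) (trans_rate N b M lam mu p r)"
    and stat: "stationary_dist (states N b M) (trans_rate N b M lam mu p r) pd"
  shows
    "let \<Delta> = ln (real N) / sqrt (real N);
         \<eta> = lam + kk b M mu p * \<Delta>;
         h = (\<lambda>x::real. max (x - \<eta>) 0);
         g' = (\<lambda>x::real. - max (x - \<eta>) 0 / \<Delta>);
         D1 = (\<lambda>s. \<Sum>m=1..M. ww M mu p m * S_im N s 1 m);
         J1 = (\<Sum>s\<in>states N b M. pd s *
                 (g' (S_tot N b M s) * (lam * A_b N b r s - lam - \<Delta> + D1 s)
                  * (if S_tot N b M s > \<eta> + 1 / real N then 1 else 0)))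
     in (\<Sum>s\<in>states N b M. pd s * h (S_tot N b M s))
          \<le> J1 + (5 * mu_max M mu + lam) / (sqrt (real N) * ln (real N))"
proof -
  define X where "X = states N b M"
  have fin: "finite X" using irred by (simp add: irreducible_ctmc_def X_def)
  have Npos: "0 < real N" using N2 by simp
  have lnpos: "0 < ln (real N)" using N2 by simp
  have sqpos: "0 < sqrt (real N)" using N2 by simp
  define \<Delta> where "\<Delta> = ln (real N) / sqrt (real N)"
  have Dpos: "0 < \<Delta>" unfolding \<Delta>_def using lnpos sqpos by simp
  define \<eta> where "\<eta> = lam + kk b M mu p * \<Delta>"
  define H where "H = (\<lambda>x::real. max (x - \<eta>) 0)"
  define \<phi> where "\<phi> = (\<lambda>x. (H x)^2/2)"
  define F where "F = (\<lambda>t. \<phi> (S_tot N b M t))"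
  define D1 where "D1 = (\<lambda>s::sys_state. \<Sum>m=1..M. ww M mu p m * S_im N s 1 m)"
  define Q where "Q = (\<lambda>s::sys_state. lam * (1 - A_b N b r s) - D1 s)"
  define mx where "mx = mu_max M mu"
  define K where "K = lam + mx"
  have Hnn: "\<And>x. 0 \<le> H x" unfolding H_def by simp
  have lam01: "0 \<le> lam" "lam \<le> 1"
  proof -
    have "1 \<le> real N powr alpha" using N2 alpha by (intro ge_one_powr_ge_zero) auto
    then have "real N powr (- alpha) \<le> 1" "0 < real N powr (- alpha)"
      using N2 by (auto simp: powr_minus field_simps)
    then show "0 \<le> lam" "lam \<le> 1" using lam_def by auto
  qed
  have vv_nn: "0 \<le> vv mu p m" if m: "m \<in> {1..M}" for m
  proof -
    have "0 \<le> (\<Prod>i\<in>{1..<m}. p i)" using p_rng m by (intro prod_nonneg) auto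
    moreover have "0 < mu m" using mu_pos m by auto
    ultimately show ?thesis unfolding vv_def by (rule divide_nonneg_pos)
  qed
  have "vv mu p 1 \<le> (\<Sum>m=1..M. vv mu p m)"
    using M1 vv_nn by (intro member_le_sum) auto
  then have "1 / mu 1 \<le> 1" using v_sum by (simp add: vv_def)
  then have mu11: "1 \<le> mu 1" using mu_pos M1 by (simp add: field_simps)
  have mu_le: "mu m \<le> mx" if "m \<in> {1..M}" for m
    unfolding mx_def mu_max_def using that by (intro Max_ge) auto
  have mx1: "1 \<le> mx" using mu_le[of 1] M1 mu11 by simp
  have ww_pc: "ww M mu p m = mu m * (1 - pc M p m)" for m
    unfolding ww_def pc_def by simp
  have ww_bnd: "0 \<le> ww M mu p m \<and> ww M mu p m \<le> mx" if m: "m \<in> {1..M}" for m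
  proof (cases "m < M")
    case True
    then have "0 \<le> p m" "p m < 1" using p_rng m by auto
    moreover have "0 < mu m" using mu_pos m by auto
    ultimately have "0 \<le> (1 - p m) * mu m" "(1 - p m) * mu m \<le> mu m"
      by (auto simp: algebra_simps)
    then show ?thesis unfolding ww_def using True mu_le[OF m] by simp
  next
    case False
    have "0 < mu m" using mu_pos m by auto
    then show ?thesis unfolding ww_def using False mu_le[OF m] by simp
  qed
  define W where "W = (\<lambda>s::sys_state. \<Sum>j<N. if 1 \<le> fst (s j) then ww M mu p (snd (s j)) else 0)"
  define R where "R = (\<lambda>s::sys_state. \<Sum>j<N. if fst (s j) < b then r s j else 0)"
  have D1W: "D1 s = W s / real N" if "s \<in> X" for s
    unfolding D1_def W_def using D1_eq that X_def by blast
  have W_bnd: "0 \<le> W s \<and> W s \<le> real N * mx" if s: "s \<in> X" for s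
  proof -
    have t: "0 \<le> (if 1 \<le> fst (s j) then ww M mu p (snd (s j)) else 0)
       \<and> (if 1 \<le> fst (s j) then ww M mu p (snd (s j)) else 0) \<le> mx" if j: "j < N" for j
      using ww_bnd[of "snd (s j)"] valid_D[OF s[unfolded X_def] j] mx1 by auto
    have "0 \<le> W s" unfolding W_def using t by (intro sum_nonneg) auto
    moreover have "W s \<le> (\<Sum>j<N. mx)" unfolding W_def using t by (intro sum_mono) auto
    ultimately show ?thesis by simp
  qed
  have D1_bnd: "0 \<le> D1 s \<and> D1 s \<le> mx" if s: "s \<in> X" for s
  proof -
    have "0 \<le> W s / real N" using W_bnd[OF s] Npos by simp
    moreover have "W s / real N \<le> mx" using W_bnd[OF s] Npos by (simp add: divide_le_eq mult.commute)
    ultimately show ?thesis using D1W[OF s] by simp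
  qed
  have RA: "R s = 1 - A_b N b r s" "0 \<le> A_b N b r s" "A_b N b r s \<le> 1" if s: "s \<in> X" for s
    using Ab_eq[OF s[unfolded X_def] policy] unfolding R_def by auto
  have Q_le: "Q s \<le> K" if s: "s \<in> X" for s
  proof -
    have "lam * (1 - A_b N b r s) \<le> lam * 1" using RA[OF s] lam01 by (intro mult_left_mono) auto
    then show ?thesis unfolding Q_def K_def using D1_bnd[OF s] mx1 by simp
  qed
  have drift_bound: "(\<Sum>t\<in>X. trans_rate N b M lam mu p r s t * (F t - F s))
      \<le> H (S_tot N b M s) * Q s + K / (2 * real N)" if s: "s \<in> X" for s
  proof -
    define x where "x = S_tot N b M s"
    have sX: "s \<in> states N b M" using s X_def by simp
    have Sx: "x = (\<Sum>k<N. real (fst (s k))) / real N" unfolding x_def by (rule S_tot_eq[OF sX])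
    define dp where "dp = \<phi> (x + 1 / real N) - \<phi> x"
    define dm where "dm = \<phi> (x - 1 / real N) - \<phi> x"
    have arr: "arr_next b s j \<in> X \<and> F (arr_next b s j) - F s = (if fst (s j) < b then dp else 0)"
      if j: "j < N" for j
    proof -
      have in1: "arr_next b s j \<in> states N b M" by (rule arr_in[OF sX j M1])
      have "S_tot N b M (arr_next b s j) = x + (if fst (s j) < b then 1 / real N else 0)"
        unfolding S_tot_eq[OF in1] tot_arr[OF j] Sx using Npos by (simp add: field_simps)
      then show ?thesis using in1 unfolding X_def F_def dp_def x_def by simp
    qed
    have dep: "dep_next s j \<in> X \<and> F (dep_next s j) - F s = dm"
      if j: "j < N" and f: "1 \<le> fst (s j)" for j
    proof -
      have in1: "dep_next s j \<in> states N b M" by (rule dep_in[OF sX j M1 f])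
      have "S_tot N b M (dep_next s j) = x - 1 / real N"
        unfolding S_tot_eq[OF in1] tot_dep[of j N s, OF j f] Sx using Npos by (simp add: field_simps)
      then show ?thesis using in1 unfolding X_def F_def dm_def x_def by simp
    qed
    have ph: "F (phase_next s j) = F s" if j: "j < N" and "phase_next s j \<in> X" for j
    proof -
      have in1: "phase_next s j \<in> states N b M" using that X_def by simp
      have "S_tot N b M (phase_next s j) = x"
        unfolding S_tot_eq[OF in1] tot_phase[OF j] Sx by simp
      then show ?thesis unfolding F_def x_def by simp
    qed
    have eq1: "(\<Sum>t\<in>X. trans_rate N b M lam mu p r s t * (F t - F s))
      = (\<Sum>j<N. lam * real N * r s j * (if fst (s j) < b then dp else 0)
         + (if 1 \<le> fst (s j) then mu (snd (s j)) * (1 - pc M p (snd (s j))) * dm else 0))"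
      by (rule drift_eq[OF fin arr dep ph])
    also have "\<dots> = (\<Sum>j<N. (lam * real N * dp) * (if fst (s j) < b then r s j else 0)
         + dm * (if 1 \<le> fst (s j) then ww M mu p (snd (s j)) else 0))"
      by (intro sum.cong) (auto simp: ww_pc)
    also have "\<dots> = (lam * real N * dp) * R s + dm * W s"
      unfolding R_def W_def by (simp add: sum.distrib sum_distrib_left)
    finally have eq: "(\<Sum>t\<in>X. trans_rate N b M lam mu p r s t * (F t - F s))
       = (lam * real N * dp) * R s + dm * W s" .
    have dp_le: "dp \<le> H x * (1 / real N) + (1 / real N)^2 / 2"
      unfolding dp_def \<phi>_def H_def using phi_up[of x "1 / real N" \<eta>] by simp
    have dm_le: "dm \<le> H x * (- 1 / real N) + (1 / real N)^2 / 2"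
      unfolding dm_def \<phi>_def H_def using phi_up[of x "- 1 / real N" \<eta>] by simp
    have Rnn: "0 \<le> R s" "R s \<le> 1" using RA[OF s] by auto
    have c1: "lam * real N * R s \<ge> 0" using lam01 Rnn Npos by simp
    have "(lam * real N * dp) * R s + dm * W s
        \<le> (lam * real N * R s) * (H x * (1 / real N) + (1 / real N)^2 / 2)
           + W s * (H x * (- 1 / real N) + (1 / real N)^2 / 2)"
    proof -
      have "(lam * real N * R s) * dp \<le> (lam * real N * R s) * (H x * (1 / real N) + (1 / real N)^2 / 2)"
        using c1 dp_le by (intro mult_left_mono) auto
      moreover have "W s * dm \<le> W s * (H x * (- 1 / real N) + (1 / real N)^2 / 2)"
        using W_bnd[OF s] dm_le by (intro mult_left_mono) auto
      moreover have "(lam * real N * dp) * R s = (lam * real N * R s) * dp" by (simp add: ac_simps)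
      moreover have "dm * W s = W s * dm" by (simp add: ac_simps)
      ultimately show ?thesis by linarith
    qed
    also have "\<dots> = H x * (lam * R s - W s / real N) + (lam * R s + W s / real N) / (2 * real N)"
      using Npos by (simp add: field_simps power2_eq_square)
    also have "\<dots> \<le> H x * Q s + K / (2 * real N)"
    proof -
      have "lam * R s - W s / real N = Q s" unfolding Q_def using RA[OF s] D1W[OF s] by simp
      moreover have "lam * R s + W s / real N \<le> K"
      proof -
        have "lam * R s \<le> lam" using Rnn lam01 by (simp add: mult_left_le)
        then show ?thesis using D1W[OF s] D1_bnd[OF s] unfolding K_def by simp
      qed
      ultimately show ?thesis using Npos by (simp add: divide_right_mono)
    qed
    finally show ?thesis using eq unfolding x_def by simp
  qed
  have pd_nn: "\<forall>s\<in>X. 0 \<le> pd s" and pd_sum: "(\<Sum>s\<in>X. pd s) = 1"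
    using stat unfolding stationary_dist_def X_def by auto
  have zero: "(\<Sum>s\<in>X. pd s * (\<Sum>t\<in>X. trans_rate N b M lam mu p r s t * (F t - F s))) = 0"
    using stat_zero[OF fin, of "trans_rate N b M lam mu p r" pd F] stat unfolding X_def by simp
  have "(\<Sum>s\<in>X. pd s * (\<Sum>t\<in>X. trans_rate N b M lam mu p r s t * (F t - F s)))
      \<le> (\<Sum>s\<in>X. pd s * (H (S_tot N b M s) * Q s + K / (2 * real N)))"
    using pd_nn drift_bound by (intro sum_mono mult_left_mono) auto
  also have "\<dots> = (\<Sum>s\<in>X. pd s * (H (S_tot N b M s) * Q s)) + (\<Sum>s\<in>X. pd s) * (K / (2 * real N))"
    by (simp add: distrib_left sum.distrib sum_distrib_right sum_divide_distrib)
  finally have EHQ: "- (K / (2 * real N)) \<le> (\<Sum>s\<in>X. pd s * (H (S_tot N b M s) * Q s))"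
    using zero pd_sum by simp
  have Knn: "0 \<le> K" unfolding K_def using lam01 mx1 by simp
  have point: "pd s * H (S_tot N b M s) - pd s * ((- H (S_tot N b M s) / \<Delta>) * (lam * A_b N b r s - lam - \<Delta> + D1 s)
        * (if S_tot N b M s > \<eta> + 1 / real N then 1 else 0))
      \<le> pd s * (1 / real N + K / (real N * \<Delta>)) - pd s * (H (S_tot N b M s) * Q s) / \<Delta>"
    if s: "s \<in> X" for s
  proof -
    define y where "y = S_tot N b M s"
    have e1: "(- H y / \<Delta>) * (lam * A_b N b r s - lam - \<Delta> + D1 s) = H y * Q s / \<Delta> + H y"
      unfolding Q_def using Dpos by (simp add: field_simps)
    have main: "H y - (H y * Q s / \<Delta> + H y) * (if y > \<eta> + 1 / real N then 1 else 0)
        \<le> 1 / real N + K / (real N * \<Delta>) - H y * Q s / \<Delta>"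
    proof (cases "y > \<eta> + 1 / real N")
      case True
      have "0 \<le> K / (real N * \<Delta>)" using Knn Npos Dpos by simp
      moreover have "0 \<le> 1 / real N" using Npos by simp
      ultimately show ?thesis using True by simp
    next
      case False
      then have Hy: "H y \<le> 1 / real N" unfolding H_def by simp
      have "H y * Q s \<le> H y * K" using Q_le[OF s] Hnn by (intro mult_left_mono) auto
      also have "\<dots> \<le> (1 / real N) * K" using Hy Knn by (intro mult_right_mono) auto
      finally have "H y * Q s / \<Delta> \<le> (1 / real N) * K / \<Delta>" using Dpos by (intro divide_right_mono) auto
      also have "\<dots> = K / (real N * \<Delta>)" by simp
      finally show ?thesis using False Hy by simp
    qed
    have "pd s * (H y - (H y * Q s / \<Delta> + H y) * (if y > \<eta> + 1 / real N then 1 else 0))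
        \<le> pd s * (1 / real N + K / (real N * \<Delta>) - H y * Q s / \<Delta>)"
      using pd_nn s main by (intro mult_left_mono) auto
    then show ?thesis unfolding y_def[symmetric] e1 by (simp add: algebra_simps)
  qed
  have "(\<Sum>s\<in>X. pd s * H (S_tot N b M s)) - (\<Sum>s\<in>X. pd s * ((- H (S_tot N b M s) / \<Delta>) * (lam * A_b N b r s - lam - \<Delta> + D1 s)
        * (if S_tot N b M s > \<eta> + 1 / real N then 1 else 0)))
      \<le> (\<Sum>s\<in>X. pd s * (1 / real N + K / (real N * \<Delta>)) - pd s * (H (S_tot N b M s) * Q s) / \<Delta>)"
    unfolding sum_subtractf[symmetric] using point by (intro sum_mono) auto
  also have "\<dots> = (1 / real N + K / (real N * \<Delta>)) - (\<Sum>s\<in>X. pd s * (H (S_tot N b M s) * Q s)) / \<Delta>"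
    unfolding sum_subtractf sum_divide_distrib[symmetric] sum_distrib_right[symmetric] pd_sum by simp
  also have "\<dots> \<le> (1 / real N + K / (real N * \<Delta>)) + (K / (2 * real N)) / \<Delta>"
  proof -
    have "- (K / (2 * real N)) / \<Delta> \<le> (\<Sum>s\<in>X. pd s * (H (S_tot N b M s) * Q s)) / \<Delta>"
      using EHQ Dpos by (intro divide_right_mono) auto
    moreover have "- (K / (2 * real N)) / \<Delta> = - ((K / (2 * real N)) / \<Delta>)" by simp
    ultimately show ?thesis by linarith
  qed
  also have "\<dots> \<le> (5 * mx + lam) / (sqrt (real N) * ln (real N))"
  proof -
    define T where "T = sqrt (real N) * ln (real N)"
    have Tpos: "0 < T" unfolding T_def using sqpos lnpos by simp
    have sq: "sqrt (real N) * sqrt (real N) = real N" using Npos by simp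
    have "real N * \<Delta> = (sqrt (real N) * sqrt (real N)) * ln (real N) / sqrt (real N)"
      unfolding \<Delta>_def sq by simp
    also have "\<dots> = T"
    proof -
      have gen: "\<And>a l::real. a \<noteq> 0 \<Longrightarrow> (a * a) * l / a = a * l" by simp
      show ?thesis unfolding T_def by (rule gen) (use sqpos in simp)
    qed
    finally have NT: "real N * \<Delta> = T" .
    have "\<Delta> / T = \<Delta> / (real N * \<Delta>)" using NT by simp
    also have "\<dots> = 1 / real N" using Dpos by simp
    finally have invN: "1 / real N = \<Delta> / T" by simp
    have k1: "K / (real N * \<Delta>) = K / T" using NT by simp
    have k2: "K / (2 * real N) / \<Delta> = (K / 2) / T" using NT by (simp add: divide_divide_eq_left)
    have lnb: "ln (real N) \<le> 3 * sqrt (real N)"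
    proof -
      have "ln (sqrt (real N)) \<le> sqrt (real N) - 1" using sqpos by (rule ln_le_minus_one)
      then have "ln (real N) / 2 \<le> sqrt (real N) - 1" using ln_sqrt[of "real N"] by simp
      then show ?thesis using sqpos by linarith
    qed
    have D3: "\<Delta> \<le> 3" unfolding \<Delta>_def using lnb sqpos by (simp add: divide_le_eq)
    have "1 / real N + K / (real N * \<Delta>) + K / (2 * real N) / \<Delta> = (\<Delta> + K + K / 2) / T"
      unfolding invN k1 k2 by (simp add: add_divide_distrib)
    also have "\<dots> \<le> (5 * mx + lam) / T"
    proof -
      have "\<Delta> + K + K / 2 \<le> 5 * mx + lam" unfolding K_def using D3 mx1 lam01 by (simp add: field_simps)
      then show ?thesis using Tpos by (intro divide_right_mono) auto
    qed
    finally show ?thesis unfolding T_def .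
  qed
  finally have key: "(\<Sum>s\<in>X. pd s * H (S_tot N b M s))
     \<le> (\<Sum>s\<in>X. pd s * ((- H (S_tot N b M s) / \<Delta>) * (lam * A_b N b r s - lam - \<Delta> + D1 s)
        * (if S_tot N b M s > \<eta> + 1 / real N then 1 else 0)))
       + (5 * mx + lam) / (sqrt (real N) * ln (real N))" by linarith
  show ?thesis using key unfolding Let_def X_def H_def \<Delta>_def \<eta>_def D1_def mx_def .
qed

end
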